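(* Let $(E,\mathcal{D},\rho)$ be a U-matroid and let $a\in E$ with $\{a\}\notin\mathcal{D}$. Then $(E,\mathcal{D}[a],\rho_a)$ is a U-matroid (and hence a lattice extension of $(E,\mathcal{D},\rho)$), where $\rho_a$ is the generous atom extension of $\rho$ to $\mathcal{D}[a]$.
   Context: An accessible distributive lattice on a finite set $E$ is a family $\mathcal{D}\subseteq 2^E$ containing $\emptyset$ and $E$, closed under union and intersection, such that every nonempty $A\in\mathcal{D}$ contains some $x$ with $A\setminus\{x\}\in\mathcal{D}$. A U-matroid is a triple $(E,\mathcal{D},\rho)$ with $\mathcal{D}$ an accessible distributive lattice and $\rho:\mathcal{D}\to\mathbb{N}$ satisfying $\rho(\emptyset)=0$; $\rho(A)\le\rho(B)$ whenever $A\subseteq B$; $\rho(A)+\rho(B)\ge\rho(A\cup B)+\rho(A\cap B)$; and $\rho(A\cup\{e\})-\rho(A)\le1$ whenever $A,A\cup\{e\}\in\mathcal{D}$. For $S\subseteq E$, $\sup_\mathcal{D}(S)=\bigcap\{B\in\mathcal{D}:B\supseteq S\}$. For $a\in E$ with $\{a\}\notin\mathcal{D}$, let $\mathcal{D}[a]=\mathcal{D}\cup\{S\cup\{a\}:S\in\mathcal{D}\}$. The generous atom extension $\rho_a:\mathcal{D}[a]\to\mathbb{N}$ is: $\rho_a(S)=\rho(S)$ if $S\in\mathcal{D}$; if $S\notin\mathcal{D}$ (so $S\setminus\{a\}\in\mathcal{D}$), $\rho_a(S)=\rho(S\setminus\{a\})$ when $\rho(S\setminus\{a\})=\rho(\sup_\mathcal{D}(S))$,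 and $\rho_a(S)=\rho(S\setminus\{a\})+1$ when $\rho(S\setminus\{a\})<\rho(\sup_\mathcal{D}(S))$. A lattice extension of $(E,\mathcal{D},\rho)$ is a U-matroid $(E,\mathcal{D}',\rho')$ with $\mathcal{D}\subseteq\mathcal{D}'$ and $\rho'|_\mathcal{D}=\rho$. *)

theory Defs
  imports Main
begin

definition accessible_distributive_lattice :: "'a set \<Rightarrow> 'a set set \<Rightarrow> bool" where
  "accessible_distributive_lattice E D \<longleftrightarrow>
     finite E \<and> D \<subseteq> Pow E \<and> {} \<in> D \<and> E \<in> D \<and>
     (\<forall>A\<in>D. \<forall>B\<in>D. A \<union> B \<in> D \<and> A \<inter> B \<in> D) \<and>
     (\<forall>A\<in>D. A \<noteq> {} \<longrightarrow> (\<exists>x\<in>A. A - {x} \<in> D))"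

definition U_matroid :: "'a set \<Rightarrow> 'a set set \<Rightarrow> ('a set \<Rightarrow> nat) \<Rightarrow> bool" where
  "U_matroid E D \<rho> \<longleftrightarrow>
     accessible_distributive_lattice E D \<and>
     \<rho> {} = 0 \<and>
     (\<forall>A\<in>D. \<forall>B\<in>D. A \<subseteq> B \<longrightarrow> \<rho> A \<le> \<rho> B) \<and>
     (\<forall>A\<in>D. \<forall>B\<in>D. \<rho> A + \<rho> B \<ge> \<rho> (A \<union> B) + \<rho> (A \<inter> B)) \<and>
     (\<forall>A\<in>D. \<forall>e. A \<union> {e} \<in> D \<longrightarrow> \<rho> (A \<union> {e}) \<le> \<rho> A + 1)"

definition sup_D :: "'a set set \<Rightarrow> 'a set \<Rightarrow> 'a set" where
  "sup_D D S = \<Inter> {B \<in> D. S \<subseteq> B}"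

definition lattice_add_atom :: "'a set set \<Rightarrow> 'a \<Rightarrow> 'a set set" where
  "lattice_add_atom D a = D \<union> {S \<union> {a} | S. S \<in> D}"

definition generous_atom_ext :: "'a set set \<Rightarrow> ('a set \<Rightarrow> nat) \<Rightarrow> 'a \<Rightarrow> 'a set \<Rightarrow> nat" where
  "generous_atom_ext D \<rho> a S =
     (if S \<in> D then \<rho> S
      else if \<rho> (S - {a}) = \<rho> (sup_D D S) then \<rho> (S - {a})
      else \<rho> (S - {a}) + 1)"

definition lattice_extension ::
  "'a set \<Rightarrow> 'a set set \<Rightarrow> ('a set \<Rightarrow> nat) \<Rightarrow> 'a set set \<Rightarrow> ('a set \<Rightarrow> nat) \<Rightarrow> bool" where
  "lattice_extension E D \<rho> D' \<rho>' \<longleftrightarrow>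
     U_matroid E D' \<rho>' \<and> D \<subseteq> D' \<and> (\<forall>A\<in>D. \<rho>' A = \<rho> A)"

end

theory Submission
  imports Defs
begin

context
  fixes E :: "'a set" and D :: "'a set set" and \<rho> :: "'a set \<Rightarrow> nat"
  assumes U: "U_matroid E D \<rho>"
begin

lemma finE: "finite E" using U by (simp add: U_matroid_def accessible_distributive_lattice_def)
lemma DPow: "D \<subseteq> Pow E" using U by (simp add: U_matroid_def accessible_distributive_lattice_def)
lemma Demp: "{} \<in> D" using U by (simp add: U_matroid_def accessible_distributive_lattice_def)
lemma DE: "E \<in> D" using U by (simp add: U_matroid_def accessible_distributive_lattice_def)
lemma Dun: "A \<in> D \<Longrightarrow> B \<in> D \<Longrightarrow> A \<union> B \<in> D" using U by (simp add: U_matroid_def accessible_distributive_lattice_def)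
lemma Dint: "A \<in> D \<Longrightarrow> B \<in> D \<Longrightarrow> A \<inter> B \<in> D" using U by (simp add: U_matroid_def accessible_distributive_lattice_def)
lemma Dacc: "A \<in> D \<Longrightarrow> A \<noteq> {} \<Longrightarrow> \<exists>x\<in>A. A - {x} \<in> D" using U by (simp add: U_matroid_def accessible_distributive_lattice_def)
lemma r0: "\<rho> {} = 0" using U by (simp add: U_matroid_def)
lemma rmono: "A \<in> D \<Longrightarrow> B \<in> D \<Longrightarrow> A \<subseteq> B \<Longrightarrow> \<rho> A \<le> \<rho> B" using U by (simp add: U_matroid_def)
lemma rsub: "A \<in> D \<Longrightarrow> B \<in> D \<Longrightarrow> \<rho> (A \<union> B) + \<rho> (A \<inter> B) \<le> \<rho> A + \<rho> B" using U by (simp add: U_matroid_def)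
lemma runit: "A \<in> D \<Longrightarrow> A \<union> {e} \<in> D \<Longrightarrow> \<rho> (A \<union> {e}) \<le> \<rho> A + 1" using U by (simp add: U_matroid_def)

lemma Dfin: "A \<in> D \<Longrightarrow> finite A" using DPow finE by (meson PowD finite_subset subsetD)

lemma inter_closed: "finite F \<Longrightarrow> F \<noteq> {} \<Longrightarrow> F \<subseteq> D \<Longrightarrow> \<Inter>F \<in> D"
proof (induction F rule: finite_ne_induct)
  case (singleton x) then show ?case by simp
next
  case (insert x F) then show ?case using Dint by simp
qed

lemma sup_in: assumes "Z \<subseteq> E" shows "sup_D D Z \<in> D"
proof -
  have "finite {B \<in> D. Z \<subseteq> B}"
    by (rule finite_subset[of _ "Pow E"]) (use DPow finE in auto)
  moreover have "E \<in> {B \<in> D. Z \<subseteq> B}" using DE assms by simp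
  ultimately show ?thesis unfolding sup_D_def by (intro inter_closed) auto
qed

lemma sup_le: "Y \<in> D \<Longrightarrow> Z \<subseteq> Y \<Longrightarrow> sup_D D Z \<subseteq> Y"
  unfolding sup_D_def by auto

lemma sup_ge: "Z \<subseteq> sup_D D Z"
  unfolding sup_D_def by auto

lemma card_lemma: "S \<in> D \<Longrightarrow> T \<in> D \<Longrightarrow> \<rho> (S \<union> T) \<le> \<rho> S + card (T - S)"
proof (induct "card T" arbitrary: T rule: less_induct)
  case less
  show ?case
  proof (cases "T = {}")
    case True then show ?thesis by simp
  next
    case False
    then obtain x where x: "x \<in> T" "T - {x} \<in> D" using Dacc less.prems by blast
    have fT: "finite T" using Dfin less.prems by blast
    have "card (T - {x}) < card T" using x fT by (meson card_Diff1_less)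
    then have IH: "\<rho> (S \<union> (T - {x})) \<le> \<rho> S + card (T - {x} - S)"
      using less x by blast
    show ?thesis
    proof (cases "x \<in> S")
      case True
      then have "S \<union> T = S \<union> (T - {x})" "T - S = T - {x} - S" by auto
      then show ?thesis using IH by simp
    next
      case False
      have e1: "S \<union> T = (S \<union> (T - {x})) \<union> {x}" using x by auto
      have "\<rho> (S \<union> T) \<le> \<rho> (S \<union> (T - {x})) + 1"
        using e1 runit[of "S \<union> (T - {x})" x] Dun less.prems x by metis
      moreover have "T - S = insert x (T - {x} - S)" using x False by auto
      moreover have "finite (T - {x} - S)" using fT by simp
      ultimately show ?thesis using IH by simp
    qed
  qed
qed

lemma memD': "X \<in> lattice_add_atom D a \<longleftrightarrow> X \<in> D \<or> (\<exists>S\<in>D. X = S \<union> {a})"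
  by (auto simp: lattice_add_atom_def)

lemma key:
  assumes aE: "a \<in> E" and Z: "Z \<in> lattice_add_atom D a" and Y: "Y \<in> D"
  shows "generous_atom_ext D \<rho> a Z \<le> \<rho> Y + card (Z - Y)"
proof (cases "Z \<in> D")
  case True
  have "\<rho> Z \<le> \<rho> (Y \<union> Z)" using rmono True Y Dun by blast
  also have "\<dots> \<le> \<rho> Y + card (Z - Y)" using card_lemma Y True by blast
  finally show ?thesis using True by (simp add: generous_atom_ext_def)
next
  case False
  then obtain S where S: "S \<in> D" "Z = S \<union> {a}" using Z memD' by blast
  have aS: "a \<notin> S"
  proof
    assume "a \<in> S" then have "Z = S" using S by auto
    then show False using False S by simp
  qed
  have ZS: "Z - {a} = S" using S aS by auto
  have ZE: "Z \<subseteq> E" using S aE DPow by auto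
  have supD: "sup_D D Z \<in> D" using sup_in ZE by blast
  have "\<rho> S \<le> \<rho> (sup_D D Z)" using rmono S supD sup_ge[of Z] by auto
  then have b1: "generous_atom_ext D \<rho> a Z \<le> \<rho> S + 1"
    and b2: "generous_atom_ext D \<rho> a Z \<le> \<rho> (sup_D D Z)"
    using False ZS by (auto simp: generous_atom_ext_def)
  have fS: "finite (S - Y)" using Dfin S by blast
  show ?thesis
  proof (cases "a \<in> Y")
    case True
    have YS: "Y \<union> S \<in> D" using Dun Y S by blast
    have "sup_D D Z \<subseteq> Y \<union> S" using sup_le[OF YS] S True by auto
    then have "\<rho> (sup_D D Z) \<le> \<rho> (Y \<union> S)" using rmono supD YS by blast
    also have "\<dots> \<le> \<rho> Y + card (S - Y)" using card_lemma Y S by blast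
    also have "S - Y = Z - Y" using S True by auto
    finally show ?thesis using b2 by simp
  next
    case False
    have "\<rho> S \<le> \<rho> (Y \<union> S)" using rmono Y S Dun by blast
    also have "\<dots> \<le> \<rho> Y + card (S - Y)" using card_lemma Y S by blast
    finally have "generous_atom_ext D \<rho> a Z \<le> \<rho> Y + card (S - Y) + 1" using b1 by simp
    moreover have "Z - Y = insert a (S - Y)" using S False by auto
    ultimately show ?thesis using fS aS by simp
  qed
qed

lemma rep:
  assumes X: "X \<in> lattice_add_atom D a" and aE: "a \<in> E"
  shows "\<exists>Y\<in>D. X - Y \<subseteq> {a} \<and> generous_atom_ext D \<rho> a X = \<rho> Y + card (X - Y)"
proof (cases "X \<in> D")
  case True
  then show ?thesis by (intro bexI[of _ X]) (auto simp: generous_atom_ext_def)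
next
  case False
  then obtain S where S: "S \<in> D" "X = S \<union> {a}" using X memD' by blast
  have aS: "a \<notin> S"
  proof
    assume "a \<in> S" then have "X = S" using S by auto
    then show False using False S by simp
  qed
  have ZS: "X - {a} = S" using S aS by auto
  have ZE: "X \<subseteq> E" using S aE DPow by auto
  have supD: "sup_D D X \<in> D" using sup_in ZE by blast
  show ?thesis
  proof (cases "\<rho> S = \<rho> (sup_D D X)")
    case True
    have e: "X - sup_D D X = {}" using sup_ge[of X] by auto
    have "generous_atom_ext D \<rho> a X = \<rho> (sup_D D X)"
      using False ZS True by (simp add: generous_atom_ext_def)
    then have "X - sup_D D X \<subseteq> {a} \<and> generous_atom_ext D \<rho> a X = \<rho> (sup_D D X) + card (X - sup_D D X)"
      unfolding e by simp
    then show ?thesis using supD by blast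
  next
    case nt: False
    have "X - S = {a}" using S aS by auto
    then show ?thesis using False ZS S nt
      by (intro bexI[of _ S]) (auto simp: generous_atom_ext_def)
  qed
qed

lemma card_sub_a: "X \<subseteq> {a} \<Longrightarrow> card X = (if a \<in> X then 1 else 0)"
  by (auto simp: subset_singleton_iff)

lemma un_closed:
  assumes A: "A \<in> lattice_add_atom D a" and B: "B \<in> lattice_add_atom D a"
  shows "A \<union> B \<in> lattice_add_atom D a"
proof (cases "A \<in> D")
  case A1: True
  show ?thesis
  proof (cases "B \<in> D")
    case True then show ?thesis using A1 Dun by (simp add: lattice_add_atom_def)
  next
    case False
    then obtain T where T: "T \<in> D" "B = T \<union> {a}" using B memD' by blast
    have "A \<union> B = (A \<union> T) \<union> {a}" using T by auto
    moreover have "A \<union> T \<in> D" using A1 T Dun by blast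
    ultimately show ?thesis by (auto simp: lattice_add_atom_def)
  qed
next
  case False
  then obtain S where S: "S \<in> D" "A = S \<union> {a}" using A memD' by blast
  show ?thesis
  proof (cases "B \<in> D")
    case True
    have "A \<union> B = (S \<union> B) \<union> {a}" using S by auto
    moreover have "S \<union> B \<in> D" using True S Dun by blast
    ultimately show ?thesis by (auto simp: lattice_add_atom_def)
  next
    case False
    then obtain T where T: "T \<in> D" "B = T \<union> {a}" using B memD' by blast
    have "A \<union> B = (S \<union> T) \<union> {a}" using S T by auto
    moreover have "S \<union> T \<in> D" using S T Dun by blast
    ultimately show ?thesis by (auto simp: lattice_add_atom_def)
  qed
qed

lemma int_closed1:
  assumes A: "A \<in> D" and B: "B \<in> lattice_add_atom D a"
  shows "A \<inter> B \<in> lattice_add_atom D a"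
proof (cases "B \<in> D")
  case True then show ?thesis using A Dint by (simp add: lattice_add_atom_def)
next
  case False
  then obtain T where T: "T \<in> D" "B = T \<union> {a}" using B memD' by blast
  show ?thesis
  proof (cases "a \<in> A")
    case True
    have "A \<inter> B = (A \<inter> T) \<union> {a}" using T True by auto
    moreover have "A \<inter> T \<in> D" using A T Dint by blast
    ultimately show ?thesis by (auto simp: lattice_add_atom_def)
  next
    case False
    have "A \<inter> B = A \<inter> T" using T False by auto
    moreover have "A \<inter> T \<in> D" using A T Dint by blast
    ultimately show ?thesis by (auto simp: lattice_add_atom_def)
  qed
qed

lemma int_closed:
  assumes A: "A \<in> lattice_add_atom D a" and B: "B \<in> lattice_add_atom D a"
  shows "A \<inter> B \<in> lattice_add_atom D a"
proof (cases "A \<in> D")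
  case True then show ?thesis using int_closed1 B by blast
next
  case False
  then obtain S where S: "S \<in> D" "A = S \<union> {a}" using A memD' by blast
  show ?thesis
  proof (cases "B \<in> D")
    case True
    have "A \<inter> B = B \<inter> A" by auto
    then show ?thesis using int_closed1[OF True A] by simp
  next
    case False
    then obtain T where T: "T \<in> D" "B = T \<union> {a}" using B memD' by blast
    have "A \<inter> B = (S \<inter> T) \<union> {a}" using S T by auto
    moreover have "S \<inter> T \<in> D" using S T Dint by blast
    ultimately show ?thesis by (auto simp: lattice_add_atom_def)
  qed
qed

lemma acc_closed:
  assumes A: "A \<in> lattice_add_atom D a" and ne: "A \<noteq> {}"
  shows "\<exists>x\<in>A. A - {x} \<in> lattice_add_atom D a"
proof (cases "A \<in> D")
  case True
  then obtain x where "x \<in> A" "A - {x} \<in> D" using Dacc ne by blast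
  then show ?thesis by (auto simp: lattice_add_atom_def)
next
  case False
  then obtain S where S: "S \<in> D" "A = S \<union> {a}" using A memD' by blast
  have aS: "a \<notin> S"
  proof
    assume "a \<in> S" then have "A = S" using S by auto
    then show False using False S by simp
  qed
  have "A - {a} = S" using S aS by auto
  then have "A - {a} \<in> lattice_add_atom D a" using S by (simp add: lattice_add_atom_def)
  moreover have "a \<in> A" using S by auto
  ultimately show ?thesis by blast
qed

lemma lat_ext:
  assumes aE: "a \<in> E"
  shows "accessible_distributive_lattice E (lattice_add_atom D a)"
  unfolding accessible_distributive_lattice_def
proof (intro conjI)
  show "finite E" by (rule finE)
  show "lattice_add_atom D a \<subseteq> Pow E" using DPow aE by (auto simp: lattice_add_atom_def)
  show "{} \<in> lattice_add_atom D a" using Demp by (simp add: lattice_add_atom_def)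
  show "E \<in> lattice_add_atom D a" using DE by (simp add: lattice_add_atom_def)
  show "\<forall>A\<in>lattice_add_atom D a. \<forall>B\<in>lattice_add_atom D a.
      A \<union> B \<in> lattice_add_atom D a \<and> A \<inter> B \<in> lattice_add_atom D a"
    using un_closed int_closed by blast
  show "\<forall>A\<in>lattice_add_atom D a. A \<noteq> {} \<longrightarrow> (\<exists>x\<in>A. A - {x} \<in> lattice_add_atom D a)"
    using acc_closed by blast
qed

lemma main:
  assumes aE: "a \<in> E"
  shows "U_matroid E (lattice_add_atom D a) (generous_atom_ext D \<rho> a)"
proof -
  let ?D = "lattice_add_atom D a" and ?r = "generous_atom_ext D \<rho> a"
  have lat: "accessible_distributive_lattice E ?D" using lat_ext[OF aE] .
  have r0': "?r {} = 0" using Demp r0 by (simp add: generous_atom_ext_def)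
  have mono': "?r A \<le> ?r B" if A: "A \<in> ?D" and B: "B \<in> ?D" and AB: "A \<subseteq> B" for A B
  proof -
    obtain Y where Y: "Y \<in> D" "B - Y \<subseteq> {a}" "?r B = \<rho> Y + card (B - Y)"
      using rep[OF B aE] by blast
    have "?r A \<le> \<rho> Y + card (A - Y)" using key[OF aE A Y(1)] .
    moreover have "card (A - Y) \<le> card (B - Y)" using AB Y(2)
      by (intro card_mono) (auto intro: finite_subset)
    ultimately show ?thesis using Y by simp
  qed
  have sub': "?r (A \<union> B) + ?r (A \<inter> B) \<le> ?r A + ?r B" if A: "A \<in> ?D" and B: "B \<in> ?D" for A B
  proof -
    have AB1: "A \<union> B \<in> ?D" and AB2: "A \<inter> B \<in> ?D" using lat A B
      unfolding accessible_distributive_lattice_def by blast+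
    obtain Y1 where Y1: "Y1 \<in> D" "A - Y1 \<subseteq> {a}" "?r A = \<rho> Y1 + card (A - Y1)"
      using rep[OF A aE] by blast
    obtain Y2 where Y2: "Y2 \<in> D" "B - Y2 \<subseteq> {a}" "?r B = \<rho> Y2 + card (B - Y2)"
      using rep[OF B aE] by blast
    have "?r (A \<union> B) \<le> \<rho> (Y1 \<union> Y2) + card (A \<union> B - (Y1 \<union> Y2))"
      using key[OF aE AB1] Dun Y1 Y2 by blast
    moreover have "?r (A \<inter> B) \<le> \<rho> (Y1 \<inter> Y2) + card (A \<inter> B - (Y1 \<inter> Y2))"
      using key[OF aE AB2] Dint Y1 Y2 by blast
    moreover have "\<rho> (Y1 \<union> Y2) + \<rho> (Y1 \<inter> Y2) \<le> \<rho> Y1 + \<rho> Y2" using rsub Y1 Y2 by blast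
    moreover have "card (A \<union> B - (Y1 \<union> Y2)) + card (A \<inter> B - (Y1 \<inter> Y2))
        \<le> card (A - Y1) + card (B - Y2)"
    proof -
      have s1: "A \<union> B - (Y1 \<union> Y2) \<subseteq> {a}" "A \<inter> B - (Y1 \<inter> Y2) \<subseteq> {a}" using Y1 Y2 by auto
      show ?thesis
        using card_sub_a[OF s1(1)] card_sub_a[OF s1(2)] card_sub_a[OF Y1(2)] card_sub_a[OF Y2(2)]
        by auto
    qed
    ultimately show ?thesis using Y1 Y2 by linarith
  qed
  have unit': "?r (A \<union> {e}) \<le> ?r A + 1" if A: "A \<in> ?D" and Ae: "A \<union> {e} \<in> ?D" for A e
  proof -
    obtain Y where Y: "Y \<in> D" "A - Y \<subseteq> {a}" "?r A = \<rho> Y + card (A - Y)"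
      using rep[OF A aE] by blast
    have "?r (A \<union> {e}) \<le> \<rho> Y + card (A \<union> {e} - Y)" using key[OF aE Ae Y(1)] .
    moreover have "card (A \<union> {e} - Y) \<le> card (A - Y) + 1"
    proof -
      have "finite (A - Y)" using Y(2) by (rule finite_subset) simp
      then have "card (A \<union> {e} - Y) \<le> card (insert e (A - Y))"
        by (intro card_mono) auto
      also have "\<dots> \<le> card (A - Y) + 1" using \<open>finite (A - Y)\<close> by (simp add: card_insert_if)
      finally show ?thesis .
    qed
    ultimately show ?thesis using Y by simp
  qed
  show ?thesis unfolding U_matroid_def
    using lat r0' mono' sub' unit' by (simp add: add.commute)
qed

end

theorem theorem4p10:
  fixes E :: "'a set" and D :: "'a set set" and \<rho> :: "'a set \<Rightarrow> nat" and a :: 'a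
  assumes "U_matroid E D \<rho>"
    and "a \<in> E"
    and "{a} \<notin> D"
  shows "U_matroid E (lattice_add_atom D a) (generous_atom_ext D \<rho> a)
    \<and> lattice_extension E D \<rho> (lattice_add_atom D a) (generous_atom_ext D \<rho> a)"
proof -
  have M: "U_matroid E (lattice_add_atom D a) (generous_atom_ext D \<rho> a)"
    using main[OF assms(1) assms(2)] .
  moreover have "D \<subseteq> lattice_add_atom D a" by (auto simp: lattice_add_atom_def)
  moreover have "\<forall>A\<in>D. generous_atom_ext D \<rho> a A = \<rho> A" by (simp add: generous_atom_ext_def)
  ultimately show ?thesis by (simp add: lattice_extension_def)
qed

end
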